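(* Let $\mathcal A,\mathcal B>0$, $\alpha,\beta\in(0,1)$, $h,\tau>0$, and for a real number $\theta$ let $s=\sin^2(\theta h/2)$, $$\widetilde{\mathcal Q}=\Big[1-\tfrac{4}{35}s^3\Big]+4g_0^{(\alpha,\beta)}s\Big[1+\tfrac13 s+\tfrac{8}{45}s^2\Big],\qquad \widetilde{\mathcal P}=\Big[1-\tfrac{4}{35}s^3\Big]-4g_1^{(\alpha,\beta)}s\Big[1+\tfrac13 s+\tfrac{8}{45}s^2\Big].$$ Then $|\widetilde{\mathcal P}/\widetilde{\mathcal Q}|\le1$ for every real $\theta$.
   Context: $\varpi_\ell^{(\sigma)}=(-1)^\ell\binom{\sigma}{\ell}$, $g_0^{(\sigma)}=\frac{1+\sigma}{2}\varpi_0^{(\sigma)}$, $g_\ell^{(\sigma)}=\frac{1+\sigma}{2}\varpi_\ell^{(\sigma)}+\frac{1-\sigma}{2}\varpi_{\ell-1}^{(\sigma)}$ ($\ell\ge1$); $\mu_\alpha=\tau^\alpha\mathcal A/h^2$, $\mu_\beta=\tau^\beta\mathcal B/h^2$, $g_\ell^{(\alpha,\beta)}=\mu_\alpha g_\ell^{(1-\alpha)}+\mu_\beta g_\ell^{(1-\beta)}$. *)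

theory Defs
  imports Complex_Main
begin

definition varpi :: "real \<Rightarrow> nat \<Rightarrow> real" where
  "varpi \<sigma> l = (-1) ^ l * (\<sigma> gchoose l)"

definition gcoef :: "real \<Rightarrow> nat \<Rightarrow> real" where
  "gcoef \<sigma> l = (if l = 0 then (1 + \<sigma>) / 2 * varpi \<sigma> 0
     else (1 + \<sigma>) / 2 * varpi \<sigma> l + (1 - \<sigma>) / 2 * varpi \<sigma> (l - 1))"

definition gab :: "real \<Rightarrow> real \<Rightarrow> real \<Rightarrow> real \<Rightarrow> real \<Rightarrow> real \<Rightarrow> nat \<Rightarrow> real" where
  "gab A B \<alpha> \<beta> h \<tau> l =
     (\<tau> powr \<alpha> * A / h\<^sup>2) * gcoef (1 - \<alpha>) l + (\<tau> powr \<beta> * B / h\<^sup>2) * gcoef (1 - \<beta>) l"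

end

theory Submission
  imports Defs
begin

lemma gc0: "gcoef s 0 = (1+s)/2" by (simp add: gcoef_def varpi_def)
lemma gc1: "gcoef s 1 = (1 - 2*s - s^2)/2"
  by (simp add: gcoef_def varpi_def power2_eq_square field_simps)

theorem lemma8:
  fixes A B \<alpha> \<beta> h \<tau> \<theta> :: real
  assumes "A > 0" "B > 0" "0 < \<alpha>" "\<alpha> < 1" "0 < \<beta>" "\<beta> < 1" "h > 0" "\<tau> > 0"
  defines "s \<equiv> (sin (\<theta> * h / 2))\<^sup>2"
  defines "Q \<equiv> (1 - 4/35 * s^3) + 4 * gab A B \<alpha> \<beta> h \<tau> 0 * s * (1 + s/3 + 8/45 * s\<^sup>2)"
  defines "P \<equiv> (1 - 4/35 * s^3) - 4 * gab A B \<alpha> \<beta> h \<tau> 1 * s * (1 + s/3 + 8/45 * s\<^sup>2)"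
  shows "\<bar>P / Q\<bar> \<le> 1"
proof -
  define a where "a = \<tau> powr \<alpha> * A / h\<^sup>2"
  define b where "b = \<tau> powr \<beta> * B / h\<^sup>2"
  have a: "a > 0" using assms unfolding a_def by simp
  have b: "b > 0" using assms unfolding b_def by simp
  define G0 where "G0 = gab A B \<alpha> \<beta> h \<tau> 0"
  define G1 where "G1 = gab A B \<alpha> \<beta> h \<tau> 1"
  have G0: "G0 = a*((2-\<alpha>)/2) + b*((2-\<beta>)/2)"
    unfolding G0_def gab_def a_def b_def gc0 by simp
  have G1: "G1 = a*((1 - 2*(1-\<alpha>) - (1-\<alpha>)^2)/2) + b*((1 - 2*(1-\<beta>) - (1-\<beta>)^2)/2)"
    unfolding G1_def gab_def a_def b_def gc1 by simp
  have s0: "0 \<le> s" and s1: "s \<le> 1" unfolding s_def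
    by (auto simp: sin_squared_eq abs_square_le_1)
  define c where "c = 1 - 4/35 * s^3"
  define d where "d = 4 * s * (1 + s/3 + 8/45 * s\<^sup>2)"
  have "s^3 \<le> 1" using s0 s1 by (simp add: power_le_one)
  hence c: "c > 0" unfolding c_def by simp
  have d: "d \<ge> 0" unfolding d_def using s0 by simp
  have g0: "G0 > 0" unfolding G0 using a b assms by (simp add: add_pos_pos)
  have x1: "\<alpha>*(3 - \<alpha>) \<ge> 0" "\<beta>*(3 - \<beta>) \<ge> 0" using assms by auto
  have g01: "G0 + G1 \<ge> 0" unfolding G0 G1
  proof -
    have "a*((2-\<alpha>)/2) + b*((2-\<beta>)/2) + (a*((1 - 2*(1-\<alpha>) - (1-\<alpha>)^2)/2) + b*((1 - 2*(1-\<beta>) - (1-\<beta>)^2)/2))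
       = a * (\<alpha>*(3 - \<alpha>))/2 + b*(\<beta>*(3 - \<beta>))/2"
      by (simp add: field_simps power2_eq_square)
    also have "\<dots> \<ge> 0" using a b x1 by simp
    finally show "0 \<le> a*((2-\<alpha>)/2) + b*((2-\<beta>)/2) + (a*((1 - 2*(1-\<alpha>) - (1-\<alpha>)^2)/2) + b*((1 - 2*(1-\<beta>) - (1-\<beta>)^2)/2))" .
  qed
  have x2: "(1-\<alpha>)*(4 - \<alpha>) \<ge> 0" "(1-\<beta>)*(4 - \<beta>) \<ge> 0" using assms by auto
  have g10: "G1 \<le> G0" unfolding G0 G1
  proof -
    have "a*((2-\<alpha>)/2) + b*((2-\<beta>)/2) - (a*((1 - 2*(1-\<alpha>) - (1-\<alpha>)^2)/2) + b*((1 - 2*(1-\<beta>) - (1-\<beta>)^2)/2))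
       = a * ((1-\<alpha>)*(4 - \<alpha>))/2 + b*((1-\<beta>)*(4 - \<beta>))/2"
      by (simp add: field_simps power2_eq_square)
    also have "\<dots> \<ge> 0" using a b x2 by simp
    finally show "a*((1 - 2*(1-\<alpha>) - (1-\<alpha>)^2)/2) + b*((1 - 2*(1-\<beta>) - (1-\<beta>)^2)/2) \<le> a*((2-\<alpha>)/2) + b*((2-\<beta>)/2)" by simp
  qed
  have QQ: "Q = c + G0 * d" unfolding Q_def c_def d_def G0_def by simp
  have PP: "P = c - G1 * d" unfolding P_def c_def d_def G1_def by simp
  have q: "Q > 0" unfolding QQ using c d g0 by (simp add: add_pos_nonneg)
  have "(G0 + G1) * d \<ge> 0" using g01 d by simp
  hence u: "P \<le> Q" unfolding PP QQ by (simp add: algebra_simps)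
  have "(G0 - G1) * d \<ge> 0" using g10 d by simp
  hence l: "-Q \<le> P" unfolding PP QQ using c by (simp add: algebra_simps)
  show ?thesis using u l q by (simp add: abs_le_iff divide_le_eq le_divide_eq)
qed

end
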